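(* Let $G$ be a torsion abelian group (with the discrete topology), let $\widehat G$ be its Pontryagin dual (a totally disconnected, i.e. $0$-dimensional, compact abelian group), and let $\varphi\colon G\to G$ be an endomorphism with dual endomorphism $\widehat\varphi\colon\widehat G\to\widehat G$, $\widehat\varphi(\chi)=\chi\circ\varphi$. Then $\varphi$ is (algebraically) positively expansive if and only if $\widehat\varphi$ is topologically positively expansive. Moreover, if $\varphi$ is an automorphism, then $\varphi$ is (algebraically) expansive if and only if $\widehat\varphi$ is topologically expansive.
   Context: All groups are abelian; $\mathbb N=\{0,1,2,\dots\}$. An endomorphism $\varphi\colon G\to G$ is (algebraically) positively expansive if there is a finite subgroup $S\leq G$ such that for every finite subgroup $F\leq G$ there is $n\in\mathbb N$ with $F\subseteq\sum_{k=0}^n\varphi^kS$. An automorphism $\varphi$ is (algebraically) expansive if there is a finite subgroup $S\leq G$ such that for every finite subgroup $F\leq G$ there is $n\in\mathbb N$ with $F\subseteq\sum_{|k|\leq n}\varphi^kS$. A continuous endomorphism $\psi$ of a compact group $K$ with identity $e$ is topologically positively expansive if there is a neighborhood $U$ of $e$ with $\bigcap_{k\in\mathbb N}\psi^{-k}(U)=\{e\}$; a continuous automorphism $\psi$ is topologically expansive if there is a neighborhood $U$ of $e$ with $\bigcap_{k\in\mathbb Z}\psi^{-k}(U)=\{e\}$. *)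

theory Defs
  imports "HOL-Analysis.Analysis"
begin

definition is_torsion_group :: "'a::ab_group_add itself \<Rightarrow> bool" where
  "is_torsion_group _ \<longleftrightarrow> (\<forall>x::'a. \<exists>n::nat. n > 0 \<and> (\<Sum>i<n. x) = 0)"

definition is_endo :: "('a::ab_group_add \<Rightarrow> 'a) \<Rightarrow> bool" where
  "is_endo \<phi> \<longleftrightarrow> (\<forall>x y. \<phi> (x + y) = \<phi> x + \<phi> y)"

definition is_subgroup :: "'a::ab_group_add set \<Rightarrow> bool" where
  "is_subgroup S \<longleftrightarrow> 0 \<in> S \<and> (\<forall>x\<in>S. \<forall>y\<in>S. x + y \<in> S) \<and> (\<forall>x\<in>S. - x \<in> S)"

definition pos_trajectory :: "('a::ab_group_add \<Rightarrow> 'a) \<Rightarrow> 'a set \<Rightarrow> nat \<Rightarrow> 'a set" where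
  "pos_trajectory \<phi> S n =
     {(\<Sum>k\<le>n. x k) | x. \<forall>k\<le>n. x k \<in> (\<phi> ^^ k) ` S}"

definition full_trajectory :: "('a::ab_group_add \<Rightarrow> 'a) \<Rightarrow> 'a set \<Rightarrow> nat \<Rightarrow> 'a set" where
  "full_trajectory \<phi> S n =
     {(\<Sum>k\<le>n. x k) + (\<Sum>k\<le>n. y k) | x y.
        \<forall>k\<le>n. x k \<in> (\<phi> ^^ k) ` S \<and> y k \<in> (inv \<phi> ^^ k) ` S}"

definition alg_pos_expansive :: "('a::ab_group_add \<Rightarrow> 'a) \<Rightarrow> bool" where
  "alg_pos_expansive \<phi> \<longleftrightarrow>
     (\<exists>S. finite S \<and> is_subgroup S \<and>
        (\<forall>F. finite F \<and> is_subgroup F \<longrightarrow> (\<exists>n. F \<subseteq> pos_trajectory \<phi> S n)))"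

definition alg_expansive :: "('a::ab_group_add \<Rightarrow> 'a) \<Rightarrow> bool" where
  "alg_expansive \<phi> \<longleftrightarrow>
     (\<exists>S. finite S \<and> is_subgroup S \<and>
        (\<forall>F. finite F \<and> is_subgroup F \<longrightarrow> (\<exists>n. F \<subseteq> full_trajectory \<phi> S n)))"

text \<open>Pontryagin dual: continuous homomorphisms from the discrete group into the circle
  group (unit complex numbers), with the compact-open topology, which for a discrete group
  is the topology of pointwise convergence, i.e. the subspace topology of the product topology.\<close>

definition characters :: "('a::ab_group_add \<Rightarrow> complex) set" where
  "characters = {c. (\<forall>x y. c (x + y) = c x * c y) \<and> (\<forall>x. cmod (c x) = 1)}"

definition dual_top :: "('a::ab_group_add \<Rightarrow> complex) topology" where
  "dual_top = top_of_set characters"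

definition trivial_char :: "'a \<Rightarrow> complex" where
  "trivial_char = (\<lambda>_. 1)"

definition dual_map :: "('a::ab_group_add \<Rightarrow> 'a) \<Rightarrow> ('a \<Rightarrow> complex) \<Rightarrow> ('a \<Rightarrow> complex)" where
  "dual_map \<phi> c = c \<circ> \<phi>"

definition top_pos_expansive :: "'b topology \<Rightarrow> 'b \<Rightarrow> ('b \<Rightarrow> 'b) \<Rightarrow> bool" where
  "top_pos_expansive X e \<psi> \<longleftrightarrow>
     (\<exists>U. U \<subseteq> topspace X \<and> (\<exists>V. openin X V \<and> e \<in> V \<and> V \<subseteq> U) \<and>
        {x \<in> topspace X. \<forall>k::nat. (\<psi> ^^ k) x \<in> U} = {e})"

definition top_expansive :: "'b topology \<Rightarrow> 'b \<Rightarrow> ('b \<Rightarrow> 'b) \<Rightarrow> bool" where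
  "top_expansive X e \<psi> \<longleftrightarrow>
     (\<exists>U. U \<subseteq> topspace X \<and> (\<exists>V. openin X V \<and> e \<in> V \<and> V \<subseteq> U) \<and>
        {x \<in> topspace X. \<forall>k::nat. (\<psi> ^^ k) x \<in> U \<and> (inv_into (topspace X) \<psi> ^^ k) x \<in> U} = {e})"

end

theory Submission
  imports Defs
begin


primrec mul :: "nat \<Rightarrow> 'a::ab_group_add \<Rightarrow> 'a" where
  "mul 0 x = 0"
| "mul (Suc n) x = x + mul n x"

lemma sum_mul: "(\<Sum>i<n. x) = mul n x"
  by (induction n) (auto simp: add.commute)

lemma mul_add: "mul (a + b) x = mul a x + mul b x"
  by (induction a) (auto simp: add.assoc)

lemma mul_mult: "mul (a * b) x = mul a (mul b x)"
  by (induction a) (auto simp: mul_add)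

lemma mul_zero[simp]: "mul a 0 = (0::'a::ab_group_add)"
  by (induction a) auto

lemma mul_one[simp]: "mul 1 x = x" by simp

lemma torsion_D:
  assumes "is_torsion_group TYPE('a::ab_group_add)"
  obtains n where "n > 0" "mul n (x::'a) = 0"
  using assms unfolding is_torsion_group_def sum_mul by blast

lemma mul_mod:
  assumes "mul n x = 0"
  shows "mul (j mod n) x = mul j x"
proof -
  have "mul j x = mul (j mod n + (j div n) * n) x" by simp
  also have "\<dots> = mul (j mod n) x" by (simp only: mul_add mul_mult assms mul_zero) simp
  finally show ?thesis by simp
qed

lemma mul_neg:
  assumes "mul n x = 0" "n > 0"
  shows "mul (n - 1) x = - x"
proof -
  have "mul n x = mul (Suc (n - 1)) x" using assms(2) by simp
  then have "x + mul (n - 1) x = 0" using assms(1) by simp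
  then show ?thesis by (simp add: eq_neg_iff_add_eq_0 add.commute)
qed

lemma gen_subgroup:
  assumes tor: "is_torsion_group TYPE('a::ab_group_add)" and "finite (X::'a set)"
  shows "\<exists>S. finite S \<and> is_subgroup S \<and> X \<subseteq> S"
  using assms(2)
proof (induction X rule: finite_induct)
  case empty
  show ?case by (rule exI[of _ "{0}"]) (auto simp: is_subgroup_def)
next
  case (insert x X)
  then obtain S where S: "finite S" "is_subgroup S" "X \<subseteq> S" by blast
  obtain n where n: "n > 0" "mul n x = 0" using torsion_D[OF tor] by blast
  define S' where "S' = {s + mul j x | s j. s \<in> S}"
  have "S' = (\<lambda>(s,j). s + mul j x) ` (S \<times> {..<n})"
  proof
    show "S' \<subseteq> (\<lambda>(s,j). s + mul j x) ` (S \<times> {..<n})"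
    proof
      fix y assume "y \<in> S'"
      then obtain s j where "s \<in> S" "y = s + mul j x" unfolding S'_def by blast
      then have "y = (\<lambda>(s,j). s + mul j x) (s, j mod n)" using mul_mod[OF n(2)] by simp
      then show "y \<in> (\<lambda>(s,j). s + mul j x) ` (S \<times> {..<n})" using \<open>s \<in> S\<close> n(1) by force
    qed
  qed (auto simp: S'_def)
  then have fin: "finite S'" using S(1) by simp
  have sub: "is_subgroup S'"
    unfolding is_subgroup_def
  proof (intro conjI ballI)
    have "0 \<in> S" using S(2) unfolding is_subgroup_def by blast
    moreover have "(0::'a) = 0 + mul 0 x" by simp
    ultimately show "0 \<in> S'" unfolding S'_def by blast
  next
    fix a b assume "a \<in> S'" "b \<in> S'"
    then obtain s j s' j' where "s \<in> S" "s' \<in> S" "a = s + mul j x" "b = s' + mul j' x"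
      unfolding S'_def by blast
    then have "a + b = (s + s') + mul (j + j') x" by (simp add: mul_add algebra_simps)
    moreover have "s + s' \<in> S" using S(2) \<open>s \<in> S\<close> \<open>s' \<in> S\<close> unfolding is_subgroup_def by blast
    ultimately show "a + b \<in> S'" unfolding S'_def by blast
  next
    fix a assume "a \<in> S'"
    then obtain s j where "s \<in> S" "a = s + mul j x" unfolding S'_def by blast
    have nn: "mul (n - Suc 0) x = - x" using mul_neg[OF n(2) n(1)] by simp
    have "mul j (mul (n - 1) x) = - mul j x"
      by (induction j) (simp_all add: nn algebra_simps)
    then have "- a = - s + mul (j * (n - 1)) x" using \<open>a = _\<close> by (simp add: mul_mult)
    moreover have "- s \<in> S" using S(2) \<open>s \<in> S\<close> unfolding is_subgroup_def by blast
    ultimately show "- a \<in> S'" unfolding S'_def by blast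
  qed
  have "insert x X \<subseteq> S'"
  proof -
    have "x = 0 + mul 1 x" by simp
    moreover have "0 \<in> S" using S(2) unfolding is_subgroup_def by blast
    ultimately have "x \<in> S'" unfolding S'_def by blast
    moreover have "X \<subseteq> S'"
    proof
      fix y assume "y \<in> X"
      then have "y \<in> S" "y = y + mul 0 x" using S(3) by auto
      then show "y \<in> S'" unfolding S'_def by blast
    qed
    ultimately show ?thesis by blast
  qed
  then show ?case using fin sub by blast
qed



lemma char_add: "c \<in> characters \<Longrightarrow> c (x + y) = c x * c y"
  unfolding characters_def by blast

lemma char_norm: "c \<in> characters \<Longrightarrow> cmod (c x) = 1"
  unfolding characters_def by blast

lemma char_zero: assumes "c \<in> characters" shows "c 0 = 1"
proof -
  have "c 0 = c 0 * c 0" using char_add[OF assms, of 0 0] by simp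
  moreover have "c 0 \<noteq> 0" using char_norm[OF assms, of 0] by auto
  ultimately show ?thesis by (metis mult_cancel_left2)
qed

lemma char_comp: "c \<in> characters \<Longrightarrow> is_endo f \<Longrightarrow> c \<circ> f \<in> characters"
  unfolding characters_def is_endo_def by auto

lemma char_sum: assumes "c \<in> characters" shows "c (sum g A) = (\<Prod>x\<in>A. c (g x))"
proof (cases "finite A")
  case True then show ?thesis
    by (induction A rule: finite_induct) (auto simp: char_zero[OF assms] char_add[OF assms])
next
  case False then show ?thesis by (simp add: char_zero[OF assms])
qed

lemma orth:
  assumes c: "c \<in> characters" and S: "finite S" "is_subgroup S"
    and pos: "\<forall>s\<in>S. 0 < Re (c s)"
  shows "\<forall>s\<in>S. c s = 1"
proof (rule ccontr)
  assume "\<not> (\<forall>s\<in>S. c s = 1)"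
  then obtain t where t: "t \<in> S" "c t \<noteq> 1" by blast
  have bij: "bij_betw ((+) t) S S"
    unfolding bij_betw_def
  proof
    show "inj_on ((+) t) S" by (auto simp: inj_on_def)
    show "(+) t ` S = S"
    proof
      show "(+) t ` S \<subseteq> S" using S(2) t(1) unfolding is_subgroup_def by auto
      show "S \<subseteq> (+) t ` S"
      proof
        fix y assume "y \<in> S"
        then have "y + - t \<in> S" using S(2) t(1) unfolding is_subgroup_def by (metis uminus_add_conv_diff add.commute)
        moreover have "y = t + (y + - t)" by simp
        ultimately show "y \<in> (+) t ` S" by blast
      qed
    qed
  qed
  have "sum c S = (\<Sum>s\<in>S. c (t + s))"
    using sum.reindex_bij_betw[OF bij, of c] by simp
  also have "\<dots> = c t * sum c S"
    by (simp add: char_add[OF c] sum_distrib_left)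
  finally have "(1 - c t) * sum c S = 0" by (simp add: algebra_simps)
  then have z: "sum c S = 0" using t(2) by simp
  have "0 \<in> S" using S(2) unfolding is_subgroup_def by blast
  then have "0 < (\<Sum>s\<in>S. Re (c s))" using S(1) pos by (intro sum_pos) auto
  then show False using z by (simp add: Re_sum[symmetric])
qed

definition pchar :: "('a::ab_group_add \<times> complex) set \<Rightarrow> bool" where
  "pchar R \<longleftrightarrow> (\<forall>x a b. (x,a)\<in>R \<longrightarrow> (x,b)\<in>R \<longrightarrow> a = b) \<and> (0,1) \<in> R \<and>
     (\<forall>x a y b. (x,a)\<in>R \<longrightarrow> (y,b)\<in>R \<longrightarrow> (x+y, a*b) \<in> R) \<and> (\<forall>x a. (x,a)\<in>R \<longrightarrow> cmod a = 1)"

lemma pchar_fun: "pchar R \<Longrightarrow> (x,a)\<in>R \<Longrightarrow> (x,b)\<in>R \<Longrightarrow> a = b"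
  unfolding pchar_def by blast
lemma pchar_0: "pchar R \<Longrightarrow> (0,1)\<in>R"
  unfolding pchar_def by blast
lemma pchar_add: "pchar R \<Longrightarrow> (x,a)\<in>R \<Longrightarrow> (y,b)\<in>R \<Longrightarrow> (x+y,a*b)\<in>R"
  unfolding pchar_def by blast
lemma pchar_norm: "pchar R \<Longrightarrow> (x,a)\<in>R \<Longrightarrow> cmod a = 1"
  unfolding pchar_def by blast

lemma pchar_mul: "pchar R \<Longrightarrow> (x,a)\<in>R \<Longrightarrow> (mul j x, a^j) \<in> R"
  by (induction j) (auto intro: pchar_add pchar_0)

lemma pchar_neg:
  assumes tor: "is_torsion_group TYPE('a::ab_group_add)" and R: "pchar R" "((x::'a),a)\<in>R"
  shows "\<exists>b. (-x, b) \<in> R"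
proof -
  obtain n where n: "n > 0" "mul n x = 0" using torsion_D[OF tor] by blast
  show ?thesis using pchar_mul[OF R, of "n - 1"] mul_neg[OF n(2) n(1)] by auto
qed

lemma min_dvd:
  assumes tor: "is_torsion_group TYPE('a::ab_group_add)" and R: "pchar R"
    and m: "m > 0" "\<forall>r. 0 < r \<longrightarrow> r < m \<longrightarrow> mul r (h::'a) \<notin> Domain R"
    and w: "(mul m h, w) \<in> R" and d: "(mul d h, e) \<in> R"
  shows "m dvd d"
proof -
  have eq: "mul d h = mul (d mod m) h + mul (d div m) (mul m h)"
    by (metis mod_div_mult_eq mul_add mul_mult mult.commute)
  obtain b where b: "(mul (d div m) (mul m h), b) \<in> R" using pchar_mul[OF R w] by blast
  obtain b' where b': "(- mul (d div m) (mul m h), b') \<in> R" using pchar_neg[OF tor R b] by blast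
  have "mul (d mod m) h = mul d h + - mul (d div m) (mul m h)" using eq by simp
  then have "mul (d mod m) h \<in> Domain R" using pchar_add[OF R d b'] by (metis Domain.DomainI)
  moreover have "d mod m < m" using m(1) by simp
  ultimately have "d mod m = 0" using m(2) by auto
  then show ?thesis by auto
qed

lemma step_fun:
  assumes tor: "is_torsion_group TYPE('a::ab_group_add)" and R: "pchar R"
    and m: "m > 0" "\<forall>r. 0 < r \<longrightarrow> r < m \<longrightarrow> mul r (h::'a) \<notin> Domain R"
    and w: "(mul m h, w) \<in> R" and z: "z ^ m = w"
    and k: "(k,a) \<in> R" "(k',a') \<in> R" and eq: "k + mul j h = k' + mul j' h" and jj: "j \<le> j'"
  shows "a * z^j = a' * z^j'"
proof -
  define d where "d = j' - j"
  have j': "j' = d + j" using jj d_def by simp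
  have kk: "k = k' + mul d h" using eq unfolding j' mul_add by (simp add: algebra_simps)
  obtain b where b: "(-k', b) \<in> R" using pchar_neg[OF tor R k(2)] by blast
  have "mul d h = k + - k'" using kk by simp
  then obtain e where e: "(mul d h, e) \<in> R" using pchar_add[OF R k(1) b] by metis
  have "m dvd d" using min_dvd[OF tor R m w e] .
  then obtain q where q: "d = q * m" by (metis dvd_def mult.commute)
  have "(mul d h, w^q) \<in> R" unfolding q mul_mult using pchar_mul[OF R w] .
  then have "(k, a' * w^q) \<in> R" unfolding kk using pchar_add[OF R k(2)] by blast
  then have "a = a' * w^q" using pchar_fun[OF R k(1)] by blast
  also have "\<dots> = a' * z^d" unfolding q z[symmetric] by (simp add: power_mult mult.commute)
  finally show ?thesis unfolding j' by (simp add: power_add)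
qed

lemma step:
  assumes tor: "is_torsion_group TYPE('a::ab_group_add)" and R: "pchar R"
    and m: "m > 0" "\<forall>r. 0 < r \<longrightarrow> r < m \<longrightarrow> mul r (h::'a) \<notin> Domain R"
    and w: "(mul m h, w) \<in> R" and z: "z ^ m = w" "cmod z = 1"
  shows "\<exists>R'. pchar R' \<and> R \<subseteq> R' \<and> (h,z) \<in> R'"
proof -
  define R' where "R' = {(k + mul j h, a * z^j) | k a j. (k,a)\<in>R}"
  have "pchar R'"
    unfolding pchar_def
  proof (intro conjI allI impI)
    fix x a b assume "(x,a) \<in> R'" "(x,b) \<in> R'"
    then obtain k1 a1 j1 k2 a2 j2 where
      h1: "(k1,a1)\<in>R" "x = k1 + mul j1 h" "a = a1 * z^j1" and
      h2: "(k2,a2)\<in>R" "x = k2 + mul j2 h" "b = a2 * z^j2"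
      unfolding R'_def by blast
    show "a = b"
    proof (cases "j1 \<le> j2")
      case True
      then show ?thesis using step_fun[OF tor R m w z(1) h1(1) h2(1), of j1 j2] h1 h2 by simp
    next
      case False
      then show ?thesis using step_fun[OF tor R m w z(1) h2(1) h1(1), of j2 j1] h1 h2 by simp
    qed
  next
    have "(0::'a, 1::complex) \<in> R" using pchar_0[OF R] .
    moreover have "(0::'a) = 0 + mul 0 h" "(1::complex) = 1 * z^0" by simp_all
    ultimately show "(0, 1) \<in> R'" unfolding R'_def by blast
  next
    fix x a y b assume "(x,a) \<in> R'" "(y,b) \<in> R'"
    then obtain k1 a1 j1 k2 a2 j2 where
      h1: "(k1,a1)\<in>R" "x = k1 + mul j1 h" "a = a1 * z^j1" and
      h2: "(k2,a2)\<in>R" "y = k2 + mul j2 h" "b = a2 * z^j2"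
      unfolding R'_def by blast
    have "(k1 + k2, a1 * a2) \<in> R" using pchar_add[OF R h1(1) h2(1)] .
    moreover have "x + y = (k1 + k2) + mul (j1 + j2) h" using h1 h2 by (simp add: mul_add algebra_simps)
    moreover have "a * b = (a1 * a2) * z^(j1 + j2)" using h1 h2 by (simp add: power_add algebra_simps)
    ultimately show "(x + y, a * b) \<in> R'" unfolding R'_def by blast
  next
    fix x a assume "(x,a) \<in> R'"
    then obtain k1 a1 j1 where h1: "(k1,a1)\<in>R" "a = a1 * z^j1" unfolding R'_def by blast
    then show "cmod a = 1" using pchar_norm[OF R h1(1)] z(2) by (simp add: norm_mult norm_power)
  qed
  moreover have "R \<subseteq> R'"
  proof
    fix p assume "p \<in> R"
    then obtain k a where "p = (k,a)" "(k,a) \<in> R" by (cases p) auto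
    moreover have "k = k + mul 0 h" "a = a * z^0" by simp_all
    ultimately show "p \<in> R'" unfolding R'_def by blast
  qed
  moreover have "(h, z) \<in> R'"
  proof -
    have "h = 0 + mul 1 h" "z = 1 * z^1" by simp_all
    then show ?thesis using pchar_0[OF R] unfolding R'_def by blast
  qed
  ultimately show ?thesis by blast
qed



lemma least_mul:
  assumes tor: "is_torsion_group TYPE('a::ab_group_add)" and D: "0 \<in> D"
  obtains m where "m > 0" "mul m (h::'a) \<in> D" "\<forall>r. 0 < r \<longrightarrow> r < m \<longrightarrow> mul r h \<notin> D"
proof -
  obtain n where n: "n > 0" "mul n h = 0" using torsion_D[OF tor] by blast
  let ?P = "\<lambda>m. 0 < m \<and> mul m h \<in> D"
  have "?P n" using n D by simp
  then have "?P (LEAST m. ?P m)" by (rule LeastI)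
  moreover have "\<forall>r. 0 < r \<longrightarrow> r < (LEAST m. ?P m) \<longrightarrow> mul r h \<notin> D"
    using not_less_Least by blast
  ultimately show ?thesis using that by blast
qed

lemma extend_total:
  assumes tor: "is_torsion_group TYPE('a::ab_group_add)" and R0: "pchar (R0 :: ('a \<times> complex) set)"
  shows "\<exists>c\<in>characters. \<forall>x a. (x,a) \<in> R0 \<longrightarrow> c x = a"
proof -
  define A where "A = {R. pchar R \<and> R0 \<subseteq> R}"
  have "\<forall>C\<in>chains A. \<exists>U\<in>A. \<forall>X\<in>C. X \<subseteq> U"
  proof
    fix C assume C: "C \<in> chains A"
    show "\<exists>U\<in>A. \<forall>X\<in>C. X \<subseteq> U"
    proof (cases "C = {}")
      case True
      have "R0 \<in> A" using R0 unfolding A_def by blast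
      then show ?thesis using True by blast
    next
      case False
      have sub: "C \<subseteq> A" and ch: "\<forall>X\<in>C. \<forall>Y\<in>C. X \<subseteq> Y \<or> Y \<subseteq> X"
        using C unfolding chains_def chain_subset_def by blast+
      have pc: "\<And>X. X \<in> C \<Longrightarrow> pchar X" and r0: "\<And>X. X \<in> C \<Longrightarrow> R0 \<subseteq> X"
        using sub unfolding A_def by auto
      have two: "\<exists>X\<in>C. p \<in> X \<and> q \<in> X" if pq: "p \<in> \<Union>C" "q \<in> \<Union>C" for p q
      proof -
        obtain X Y where "X \<in> C" "Y \<in> C" "p \<in> X" "q \<in> Y" using pq by blast
        then show ?thesis using ch by blast
      qed
      have "pchar (\<Union>C)"
        unfolding pchar_def
      proof (intro conjI allI impI)
        fix x a b assume "(x,a) \<in> \<Union>C" "(x,b) \<in> \<Union>C"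
        then obtain X where X: "X \<in> C" "(x,a) \<in> X" "(x,b) \<in> X" using two by blast
        show "a = b" using pchar_fun[OF pc[OF X(1)] X(2) X(3)] .
      next
        obtain X where X: "X \<in> C" using False by blast
        have "(0,1) \<in> X" using pchar_0[OF pc[OF X]] .
        then show "(0,1) \<in> \<Union>C" using X by blast
      next
        fix x a y b assume "(x,a) \<in> \<Union>C" "(y,b) \<in> \<Union>C"
        then obtain X where X: "X \<in> C" "(x,a) \<in> X" "(y,b) \<in> X" using two by blast
        have "(x+y,a*b) \<in> X" using pchar_add[OF pc[OF X(1)] X(2) X(3)] .
        then show "(x+y,a*b) \<in> \<Union>C" using X(1) by blast
      next
        fix x a assume "(x,a) \<in> \<Union>C"
        then obtain X where X: "X \<in> C" "(x,a) \<in> X" by blast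
        show "cmod a = 1" using pchar_norm[OF pc[OF X(1)] X(2)] .
      qed
      moreover have "R0 \<subseteq> \<Union>C" using r0 False by blast
      ultimately show ?thesis unfolding A_def by blast
    qed
  qed
  then obtain M where M: "M \<in> A" "\<forall>X\<in>A. M \<subseteq> X \<longrightarrow> X = M" using Zorn_Lemma2 by blast
  have pM: "pchar M" and R0M: "R0 \<subseteq> M" using M(1) unfolding A_def by auto
  have dom: "Domain M = UNIV"
  proof (rule ccontr)
    assume "Domain M \<noteq> UNIV"
    then obtain h where h: "h \<notin> Domain M" by blast
    have d0: "0 \<in> Domain M" using pchar_0[OF pM] by blast
    obtain m where m: "m > 0" "mul m h \<in> Domain M" "\<forall>r. 0 < r \<longrightarrow> r < m \<longrightarrow> mul r h \<notin> Domain M"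
      using least_mul[OF tor d0, of h] by blast
    then obtain w where w: "(mul m h, w) \<in> M" by blast
    obtain z where z: "w = z ^ m" using exists_complex_root[of m w] m(1) by blast
    have "cmod z ^ m = 1" using pchar_norm[OF pM w] z by (simp add: norm_power)
    then have "cmod z ^ m = 1 ^ m" by simp
    then have zn: "cmod z = 1" using power_eq_imp_eq_base[of "cmod z" m 1] m(1) by simp
    obtain R' where R': "pchar R'" "M \<subseteq> R'" "(h,z) \<in> R'"
      using step[OF tor pM m(1) m(3) w z[symmetric] zn] by blast
    then have "R' \<in> A" using R0M unfolding A_def by blast
    then have "R' = M" using M(2) R'(2) by blast
    then show False using R'(3) h by blast
  qed
  define c where "c = (\<lambda>x. THE a. (x,a) \<in> M)"
  have cM: "(x, c x) \<in> M" for x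
  proof -
    obtain a where a: "(x,a) \<in> M" using dom by blast
    then have "c x = a" unfolding c_def by (rule the_equality) (rule pchar_fun[OF pM _ a])
    then show ?thesis using a by simp
  qed
  have "c \<in> characters"
    unfolding characters_def
  proof (intro CollectI conjI allI)
    fix x y
    show "c (x + y) = c x * c y" using pchar_fun[OF pM cM pchar_add[OF pM cM cM]] .
  next
    fix x show "cmod (c x) = 1" using pchar_norm[OF pM cM] .
  qed
  moreover have "\<forall>x a. (x,a) \<in> R0 \<longrightarrow> c x = a"
  proof (intro allI impI)
    fix x a assume "(x,a) \<in> R0"
    then have "(x,a) \<in> M" using R0M by blast
    then show "c x = a" using pchar_fun[OF pM cM] by blast
  qed
  ultimately show ?thesis by blast
qed

lemma char_ext:
  assumes tor: "is_torsion_group TYPE('a::ab_group_add)" and T: "is_subgroup T" and g: "(g::'a) \<notin> T"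
  shows "\<exists>c\<in>characters. (\<forall>t\<in>T. c t = 1) \<and> c g \<noteq> 1"
proof -
  define RT where "RT = T \<times> {1::complex}"
  have pT: "pchar RT" using T unfolding pchar_def RT_def is_subgroup_def by simp
  have DT: "Domain RT = T" unfolding RT_def by auto
  have T0: "0 \<in> T" using T unfolding is_subgroup_def by blast
  obtain m where m: "m > 0" "mul m g \<in> T" "\<forall>r. 0 < r \<longrightarrow> r < m \<longrightarrow> mul r g \<notin> T"
    using least_mul[OF tor T0, of g] by blast
  have "m \<noteq> 1" using m(2) g by auto
  then have m2: "real m \<ge> 2" using m(1) by simp
  define z where "z = cis (2 * pi / real m)"
  have zm: "z ^ m = 1" unfolding z_def Complex.DeMoivre using m(1) by simp
  have "cos (2 * pi / real m) < cos 0"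
  proof (rule cos_monotone_0_pi)
    show "0 < 2 * pi / real m" using m(1) by simp
    have "2 * pi / real m \<le> 2 * pi / 2" using m2 by (intro divide_left_mono) auto
    then show "2 * pi / real m \<le> pi" by simp
  qed simp
  then have "Re z < 1" unfolding z_def by simp
  then have "z \<noteq> 1" by auto
  have w: "(mul m g, 1) \<in> RT" using m(2) unfolding RT_def by simp
  obtain R0 where R0: "pchar R0" "RT \<subseteq> R0" "(g, z) \<in> R0"
  proof -
    have m3: "\<forall>r. 0 < r \<longrightarrow> r < m \<longrightarrow> mul r g \<notin> Domain RT" using m(3) DT by simp
    have "cmod z = 1" unfolding z_def by simp
    from step[OF tor pT m(1) m3 w zm this] show ?thesis using that by blast
  qed
  obtain c where c: "c \<in> characters" "\<forall>x a. (x,a) \<in> R0 \<longrightarrow> c x = a"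
    using extend_total[OF tor R0(1)] by blast
  have "\<forall>t\<in>T. c t = 1" using c(2) R0(2) unfolding RT_def by blast
  moreover have "c g \<noteq> 1" using c(2) R0(3) \<open>z \<noteq> 1\<close> by blast
  ultimately show ?thesis using c(1) by blast
qed



lemma triv_char[simp]: "trivial_char \<in> characters"
  unfolding trivial_char_def characters_def by simp

lemma topspace_dual[simp]: "topspace dual_top = characters"
  unfolding dual_top_def by simp

lemma finite_in_chain:
  fixes T :: "nat \<Rightarrow> 'a set"
  assumes "finite F" "\<forall>x\<in>F. \<exists>n. x \<in> T n" "\<And>m n. m \<le> n \<Longrightarrow> T m \<subseteq> T n"
  shows "\<exists>n. F \<subseteq> T n"
  using assms(1,2)
proof (induction F rule: finite_induct)
  case empty then show ?case by simp
next
  case (insert x F)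
  then obtain n where n: "F \<subseteq> T n" by blast
  obtain k where k: "x \<in> T k" using insert.prems by blast
  have "T n \<subseteq> T (max n k)" by (rule assms(3)) simp
  moreover have "T k \<subseteq> T (max n k)" by (rule assms(3)) simp
  ultimately have "F \<subseteq> T (max n k)" "x \<in> T (max n k)" using n k by auto
  then show ?case by blast
qed

lemma open_pos_set:
  assumes "finite S"
  shows "openin dual_top {c \<in> characters. \<forall>s\<in>S. 0 < Re (c s)}"
proof -
  have "open {f::'a \<Rightarrow> complex. \<forall>i\<in>S. f ((\<lambda>i. i) i) \<in> {z. 0 < Re z}}"
    by (rule product_topology_basis') (auto simp: assms open_halfspace_Re_gt)
  then have "openin dual_top (characters \<inter> {f::'a \<Rightarrow> complex. \<forall>i\<in>S. f ((\<lambda>i. i) i) \<in> {z. 0 < Re z}})"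
    unfolding dual_top_def by (rule openin_open_Int)
  moreover have "characters \<inter> {f::'a \<Rightarrow> complex. \<forall>i\<in>S. f ((\<lambda>i. i) i) \<in> {z. 0 < Re z}}
      = {c \<in> characters. \<forall>s\<in>S. 0 < Re (c s)}" by auto
  ultimately show ?thesis by simp
qed

lemma nbhd_contains_annihilator:
  assumes tor: "is_torsion_group TYPE('a::ab_group_add)"
    and V: "openin dual_top V" "trivial_char \<in> V"
  shows "\<exists>S::'a set. finite S \<and> is_subgroup S \<and>
           (\<forall>c\<in>characters. (\<forall>s\<in>S. c s = 1) \<longrightarrow> c \<in> V)"
proof -
  obtain W where W: "open W" "V = characters \<inter> W" using V(1) unfolding dual_top_def openin_open by blast
  have "trivial_char \<in> W" using V(2) W(2) by blast
  then obtain Uc where Uc: "finite {i \<in> UNIV. Uc i \<noteq> topspace euclidean}"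
      "\<forall>i\<in>UNIV. openin euclidean (Uc i)" "trivial_char \<in> Pi\<^sub>E UNIV Uc" "Pi\<^sub>E UNIV Uc \<subseteq> W"
    using W(1) unfolding open_fun_def openin_product_topology_alt by blast
  have finX: "finite {i. Uc i \<noteq> UNIV}" using Uc(1) by simp
  obtain S where S: "finite S" "is_subgroup S" "{i. Uc i \<noteq> UNIV} \<subseteq> S"
    using gen_subgroup[OF tor finX] by blast
  have "\<forall>c\<in>characters. (\<forall>s\<in>S. c s = 1) \<longrightarrow> c \<in> V"
  proof (intro ballI impI)
    fix c :: "'a \<Rightarrow> complex" assume c: "c \<in> characters" "\<forall>s\<in>S. c s = 1"
    have "c \<in> Pi\<^sub>E UNIV Uc"
      unfolding PiE_UNIV_domain
    proof
      fix i :: 'a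
      show "c i \<in> Uc i"
      proof (cases "Uc i = UNIV")
        case True then show ?thesis by simp
      next
        case False
        then have "c i = 1" using c(2) S(3) by blast
        moreover have "trivial_char i \<in> Uc i" using Uc(3) unfolding PiE_UNIV_domain by blast
        ultimately show ?thesis unfolding trivial_char_def by simp
      qed
    qed
    then show "c \<in> V" using Uc(4) W(2) c(1) by blast
  qed
  then show ?thesis using S by blast
qed

lemma generic:
  fixes f :: "'i \<Rightarrow> 'a::ab_group_add \<Rightarrow> 'a" and Tr :: "'a set \<Rightarrow> nat \<Rightarrow> 'a set"
  assumes tor: "is_torsion_group TYPE('a)" and endo: "\<And>i. is_endo (f i)"
    and H1: "\<And>S n. is_subgroup S \<Longrightarrow> is_subgroup (Tr S n)"
    and H2: "\<And>S m n. is_subgroup S \<Longrightarrow> m \<le> n \<Longrightarrow> Tr S m \<subseteq> Tr S n"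
    and H3: "\<And>S i. is_subgroup S \<Longrightarrow> \<exists>n. f i ` S \<subseteq> Tr S n"
    and H4: "\<And>S n c. c \<in> characters \<Longrightarrow> (\<forall>i. \<forall>s\<in>S. c (f i s) = 1) \<Longrightarrow> \<forall>x\<in>Tr S n. c x = 1"
  shows "(\<exists>S. finite S \<and> is_subgroup S \<and> (\<forall>F. finite F \<and> is_subgroup F \<longrightarrow> (\<exists>n. F \<subseteq> Tr S n))) \<longleftrightarrow>
     (\<exists>U. U \<subseteq> characters \<and> (\<exists>V. openin dual_top V \<and> trivial_char \<in> V \<and> V \<subseteq> U) \<and>
        {x \<in> characters. \<forall>i. x \<circ> f i \<in> U} = {trivial_char})"
proof
  assume "\<exists>S. finite S \<and> is_subgroup S \<and> (\<forall>F. finite F \<and> is_subgroup F \<longrightarrow> (\<exists>n. F \<subseteq> Tr S n))"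
  then obtain S where S: "finite S" "is_subgroup S" "\<forall>F. finite F \<and> is_subgroup F \<longrightarrow> (\<exists>n. F \<subseteq> Tr S n)"
    by blast
  define U where "U = {c \<in> characters. \<forall>s\<in>S. 0 < Re (c s)}"
  have "U \<subseteq> characters" unfolding U_def by blast
  moreover have "openin dual_top U" unfolding U_def using open_pos_set[OF S(1)] .
  moreover have tU: "trivial_char \<in> U" unfolding U_def trivial_char_def by (simp add: triv_char[unfolded trivial_char_def])
  moreover have "{x \<in> characters. \<forall>i. x \<circ> f i \<in> U} = {trivial_char}"
  proof
    show "{x \<in> characters. \<forall>i. x \<circ> f i \<in> U} \<subseteq> {trivial_char}"
    proof
      fix c assume "c \<in> {x \<in> characters. \<forall>i. x \<circ> f i \<in> U}"
      then have c: "c \<in> characters" "\<And>i. c \<circ> f i \<in> U" by auto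
      have "\<forall>i. \<forall>s\<in>S. c (f i s) = 1"
      proof
        fix i
        have "c \<circ> f i \<in> characters" "\<forall>s\<in>S. 0 < Re ((c \<circ> f i) s)" using c(2)[of i] unfolding U_def by auto
        from orth[OF this(1) S(1) S(2) this(2)] show "\<forall>s\<in>S. c (f i s) = 1" by simp
      qed
      then have cT: "\<And>n x. x \<in> Tr S n \<Longrightarrow> c x = 1" using H4[OF c(1)] by blast
      have "c g = 1" for g
      proof -
        obtain F where F: "finite F" "is_subgroup F" "{g} \<subseteq> F" using gen_subgroup[OF tor, of "{g}"] by auto
        then obtain n where "F \<subseteq> Tr S n" using S(3) by blast
        then show ?thesis using cT F(3) by blast
      qed
      then have "c = trivial_char" unfolding trivial_char_def by auto
      then show "c \<in> {trivial_char}" by simp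
    qed
  next
    show "{trivial_char} \<subseteq> {x \<in> characters. \<forall>i. x \<circ> f i \<in> U}"
    proof -
      have "trivial_char \<circ> f i = trivial_char" for i unfolding trivial_char_def by auto
      then show ?thesis using tU by auto
    qed
  qed
  ultimately show "\<exists>U. U \<subseteq> characters \<and> (\<exists>V. openin dual_top V \<and> trivial_char \<in> V \<and> V \<subseteq> U) \<and>
        {x \<in> characters. \<forall>i. x \<circ> f i \<in> U} = {trivial_char}" by blast
next
  assume "\<exists>U. U \<subseteq> characters \<and> (\<exists>V. openin dual_top V \<and> trivial_char \<in> V \<and> V \<subseteq> U) \<and>
        {x \<in> characters. \<forall>i. x \<circ> f i \<in> U} = {trivial_char}"
  then obtain U V where UV: "openin dual_top V" "trivial_char \<in> V" "V \<subseteq> U"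
     "{x \<in> characters. \<forall>i. x \<circ> f i \<in> U} = {trivial_char}" by blast
  obtain S :: "'a set" where S: "finite S" "is_subgroup S" "\<forall>c\<in>characters. (\<forall>s\<in>S. c s = 1) \<longrightarrow> c \<in> V"
    using nbhd_contains_annihilator[OF tor UV(1) UV(2)] by blast
  have all: "\<exists>n. g \<in> Tr S n" for g
  proof (rule ccontr)
    assume ng: "\<not> (\<exists>n. g \<in> Tr S n)"
    define T where "T = (\<Union>n. Tr S n)"
    have gT: "g \<notin> T" using ng unfolding T_def by blast
    have sT: "is_subgroup T"
      unfolding is_subgroup_def
    proof (intro conjI ballI)
      show "0 \<in> T" using H1[OF S(2), of 0] unfolding T_def is_subgroup_def by blast
    next
      fix x y assume "x \<in> T" "y \<in> T"
      then obtain a b where "x \<in> Tr S a" "y \<in> Tr S b" unfolding T_def by blast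
      then have "x \<in> Tr S (max a b)" "y \<in> Tr S (max a b)"
        using H2[OF S(2), of a "max a b"] H2[OF S(2), of b "max a b"] by auto
      then have "x + y \<in> Tr S (max a b)" using H1[OF S(2), of "max a b"] unfolding is_subgroup_def by blast
      then show "x + y \<in> T" unfolding T_def by blast
    next
      fix x assume "x \<in> T"
      then obtain a where "x \<in> Tr S a" unfolding T_def by blast
      then have "- x \<in> Tr S a" using H1[OF S(2), of a] unfolding is_subgroup_def by blast
      then show "- x \<in> T" unfolding T_def by blast
    qed
    obtain c where c: "c \<in> characters" "\<forall>t\<in>T. c t = 1" "c g \<noteq> 1" using char_ext[OF tor sT gT] by blast
    have "c \<circ> f i \<in> U" for i
    proof -
      have ci: "c \<circ> f i \<in> characters" using char_comp[OF c(1) endo] .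
      obtain n where "f i ` S \<subseteq> Tr S n" using H3[OF S(2)] by blast
      then have "\<forall>s\<in>S. (c \<circ> f i) s = 1" using c(2) unfolding T_def by auto
      then show ?thesis using S(3) ci UV(3) by blast
    qed
    then have "c \<in> {x \<in> characters. \<forall>i. x \<circ> f i \<in> U}" using c(1) by blast
    then have "c = trivial_char" using UV(4) by blast
    then show False using c(3) unfolding trivial_char_def by simp
  qed
  have "\<forall>F. finite F \<and> is_subgroup F \<longrightarrow> (\<exists>n. F \<subseteq> Tr S n)"
  proof (intro allI impI)
    fix F :: "'a set" assume "finite F \<and> is_subgroup F"
    then show "\<exists>n. F \<subseteq> Tr S n" using finite_in_chain[of F "Tr S"] all H2[OF S(2)] by blast
  qed
  then show "\<exists>S. finite S \<and> is_subgroup S \<and> (\<forall>F. finite F \<and> is_subgroup F \<longrightarrow> (\<exists>n. F \<subseteq> Tr S n))"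
    using S(1,2) by blast
qed



lemma endo_0: "is_endo f \<Longrightarrow> f 0 = 0"
  unfolding is_endo_def by (metis add_cancel_right_right add_0)

lemma endo_neg: "is_endo f \<Longrightarrow> f (- x) = - f x"
proof -
  assume e: "is_endo f"
  have "f (- x) + f x = 0" using e endo_0[OF e] unfolding is_endo_def by (metis add.left_inverse)
  then show "f (- x) = - f x" by (simp add: eq_neg_iff_add_eq_0)
qed

lemma endo_pow: "is_endo f \<Longrightarrow> is_endo (f ^^ k)"
  by (induction k) (auto simp: is_endo_def)

lemma endo_inv: assumes "is_endo f" "bij f" shows "is_endo (inv f)"
  unfolding is_endo_def
proof (intro allI)
  fix x y
  have "f (inv f x + inv f y) = x + y"
    using assms by (simp add: is_endo_def bij_is_surj surj_f_inv_f)
  then show "inv f (x + y) = inv f x + inv f y"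
    using assms(2) by (metis bij_is_inj inv_f_f)
qed

lemma subgroup_image: assumes e: "is_endo f" and S: "is_subgroup S" shows "is_subgroup (f ` S)"
  unfolding is_subgroup_def
proof (intro conjI ballI)
  have "0 \<in> S" using S unfolding is_subgroup_def by blast
  then show "0 \<in> f ` S" using endo_0[OF e] by (metis image_eqI)
next
  fix x y assume "x \<in> f ` S" "y \<in> f ` S"
  then obtain a b where ab: "a \<in> S" "b \<in> S" "x = f a" "y = f b" by blast
  then have "x + y = f (a + b)" using e unfolding is_endo_def by simp
  moreover have "a + b \<in> S" using S ab unfolding is_subgroup_def by blast
  ultimately show "x + y \<in> f ` S" by blast
next
  fix x assume "x \<in> f ` S"
  then obtain a where ab: "a \<in> S" "x = f a" by blast
  then have "- x = f (- a)" using endo_neg[OF e] by simp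
  moreover have "- a \<in> S" using S ab unfolding is_subgroup_def by blast
  ultimately show "- x \<in> f ` S" by blast
qed

lemma pos_sub:
  assumes e: "is_endo \<phi>" and S: "is_subgroup S"
  shows "is_subgroup (pos_trajectory \<phi> S n)"
proof -
  have Sk: "is_subgroup ((\<phi> ^^ k) ` S)" for k using subgroup_image[OF endo_pow[OF e] S] .
  show ?thesis unfolding is_subgroup_def pos_trajectory_def
  proof (intro conjI ballI)
    have "\<forall>k\<le>n. (0::'a) \<in> (\<phi> ^^ k) ` S" using Sk unfolding is_subgroup_def by blast
    then have "\<exists>x. (0::'a) = (\<Sum>k\<le>n. x k) \<and> (\<forall>k\<le>n. x k \<in> (\<phi> ^^ k) ` S)"
      by (intro exI[of _ "\<lambda>_. 0"]) simp
    then show "0 \<in> {\<Sum>k\<le>n. x k |x. \<forall>k\<le>n. x k \<in> (\<phi> ^^ k) ` S}" by blast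
  next
    fix a b assume "a \<in> {\<Sum>k\<le>n. x k |x. \<forall>k\<le>n. x k \<in> (\<phi> ^^ k) ` S}"
      "b \<in> {\<Sum>k\<le>n. x k |x. \<forall>k\<le>n. x k \<in> (\<phi> ^^ k) ` S}"
    then obtain x y where "a = (\<Sum>k\<le>n. x k)" "\<forall>k\<le>n. x k \<in> (\<phi> ^^ k) ` S"
      "b = (\<Sum>k\<le>n. y k)" "\<forall>k\<le>n. y k \<in> (\<phi> ^^ k) ` S" by blast
    moreover have "a + b = (\<Sum>k\<le>n. x k + y k)" using calculation by (simp add: sum.distrib)
    moreover have "\<forall>k\<le>n. x k + y k \<in> (\<phi> ^^ k) ` S"
      using calculation Sk unfolding is_subgroup_def by blast
    ultimately have "\<exists>z. a + b = (\<Sum>k\<le>n. z k) \<and> (\<forall>k\<le>n. z k \<in> (\<phi> ^^ k) ` S)"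
      by (intro exI[of _ "\<lambda>k. x k + y k"]) simp
    then show "a + b \<in> {\<Sum>k\<le>n. x k |x. \<forall>k\<le>n. x k \<in> (\<phi> ^^ k) ` S}" by blast
  next
    fix a assume "a \<in> {\<Sum>k\<le>n. x k |x. \<forall>k\<le>n. x k \<in> (\<phi> ^^ k) ` S}"
    then obtain x where "a = (\<Sum>k\<le>n. x k)" "\<forall>k\<le>n. x k \<in> (\<phi> ^^ k) ` S" by blast
    moreover have "- a = (\<Sum>k\<le>n. - x k)" using calculation by (simp add: sum_negf)
    moreover have "\<forall>k\<le>n. - x k \<in> (\<phi> ^^ k) ` S"
      using calculation Sk unfolding is_subgroup_def by blast
    ultimately have "\<exists>z. - a = (\<Sum>k\<le>n. z k) \<and> (\<forall>k\<le>n. z k \<in> (\<phi> ^^ k) ` S)"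
      by (intro exI[of _ "\<lambda>k. - x k"]) simp
    then show "- a \<in> {\<Sum>k\<le>n. x k |x. \<forall>k\<le>n. x k \<in> (\<phi> ^^ k) ` S}" by blast
  qed
qed

lemma pos_mono:
  assumes e: "is_endo \<phi>" and S: "is_subgroup S" and mn: "m \<le> n"
  shows "pos_trajectory \<phi> S m \<subseteq> pos_trajectory \<phi> S n"
proof
  fix a assume "a \<in> pos_trajectory \<phi> S m"
  then obtain x where x: "a = (\<Sum>k\<le>m. x k)" "\<forall>k\<le>m. x k \<in> (\<phi> ^^ k) ` S"
    unfolding pos_trajectory_def by blast
  define x' where "x' = (\<lambda>k. if k \<le> m then x k else 0)"
  have "(\<Sum>k\<le>n. x' k) = (\<Sum>k\<in>{k\<in>{..n}. k \<le> m}. x k)"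
    unfolding x'_def by (rule sum.inter_filter[symmetric]) simp
  also have "{k\<in>{..n}. k \<le> m} = {..m}" using mn by auto
  finally have "a = (\<Sum>k\<le>n. x' k)" using x(1) by simp
  moreover have "\<forall>k\<le>n. x' k \<in> (\<phi> ^^ k) ` S"
  proof (intro allI impI)
    fix k assume "k \<le> n"
    have "0 \<in> (\<phi> ^^ k) ` S" using subgroup_image[OF endo_pow[OF e] S] unfolding is_subgroup_def by blast
    then show "x' k \<in> (\<phi> ^^ k) ` S" unfolding x'_def using x(2) by auto
  qed
  ultimately show "a \<in> pos_trajectory \<phi> S n" unfolding pos_trajectory_def by blast
qed

lemma pos_contains:
  assumes e: "is_endo \<phi>" and S: "is_subgroup S"
  shows "(\<phi> ^^ k) ` S \<subseteq> pos_trajectory \<phi> S k"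
proof
  fix a assume a: "a \<in> (\<phi> ^^ k) ` S"
  define x where "x = (\<lambda>j. if j = k then a else 0)"
  have "(\<Sum>j\<le>k. x j) = a" unfolding x_def by simp
  moreover have "\<forall>j\<le>k. x j \<in> (\<phi> ^^ j) ` S"
  proof (intro allI impI)
    fix j assume "j \<le> k"
    have "0 \<in> (\<phi> ^^ j) ` S" using subgroup_image[OF endo_pow[OF e] S] unfolding is_subgroup_def by blast
    then show "x j \<in> (\<phi> ^^ j) ` S" unfolding x_def using a by auto
  qed
  ultimately show "a \<in> pos_trajectory \<phi> S k" unfolding pos_trajectory_def by blast
qed

lemma pos_char:
  assumes c: "c \<in> characters" and h: "\<forall>k. \<forall>s\<in>S. c ((\<phi> ^^ k) s) = 1"
  shows "\<forall>a\<in>pos_trajectory \<phi> S n. c a = 1"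
proof
  fix a assume "a \<in> pos_trajectory \<phi> S n"
  then obtain x where x: "a = (\<Sum>k\<le>n. x k)" "\<forall>k\<le>n. x k \<in> (\<phi> ^^ k) ` S"
    unfolding pos_trajectory_def by blast
  have "c a = (\<Prod>k\<le>n. c (x k))" unfolding x(1) using char_sum[OF c] .
  also have "\<dots> = (\<Prod>k\<le>n. 1)" using x(2) h by (intro prod.cong) auto
  finally show "c a = 1" by simp
qed

lemma dual_iter: "(dual_map \<phi> ^^ k) c = c \<circ> (\<phi> ^^ k)"
  by (induction k) (auto simp: dual_map_def funpow_swap1)

lemma full_eq: "full_trajectory \<phi> S n =
   {a + b | a b. a \<in> pos_trajectory \<phi> S n \<and> b \<in> pos_trajectory (inv \<phi>) S n}"
  unfolding full_trajectory_def pos_trajectory_def by blast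

lemma inv_dual:
  assumes e: "is_endo \<phi>" and b: "bij \<phi>" and c: "c \<in> characters"
  shows "inv_into characters (dual_map \<phi>) c = c \<circ> inv \<phi>"
proof (rule inv_into_f_eq)
  show "inj_on (dual_map \<phi>) characters"
  proof (rule inj_onI)
    fix x y assume "dual_map \<phi> x = dual_map \<phi> y"
    then have "x \<circ> \<phi> \<circ> inv \<phi> = y \<circ> \<phi> \<circ> inv \<phi>" unfolding dual_map_def by simp
    then show "x = y" using b by (simp add: o_assoc[symmetric] bij_is_surj surj_iff[THEN iffD1])
  qed
  show "c \<circ> inv \<phi> \<in> characters" using char_comp[OF c endo_inv[OF e b]] .
  show "dual_map \<phi> (c \<circ> inv \<phi>) = c" unfolding dual_map_def using b
    by (simp add: o_assoc bij_is_inj inv_o_cancel)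
qed

lemma inv_dual_iter:
  assumes e: "is_endo \<phi>" and b: "bij \<phi>" and c: "c \<in> characters"
  shows "(inv_into characters (dual_map \<phi>) ^^ k) c = c \<circ> (inv \<phi> ^^ k)"
proof (induction k)
  case 0 then show ?case by simp
next
  case (Suc k)
  have "c \<circ> (inv \<phi> ^^ k) \<in> characters" using char_comp[OF c endo_pow[OF endo_inv[OF e b]]] .
  then have "inv_into characters (dual_map \<phi>) (c \<circ> (inv \<phi> ^^ k)) = c \<circ> (inv \<phi> ^^ k) \<circ> inv \<phi>"
    using inv_dual[OF e b] by blast
  also have "\<dots> = c \<circ> (inv \<phi> ^^ Suc k)" by (simp only: funpow_Suc_right o_assoc)
  finally have *: "inv_into characters (dual_map \<phi>) (c \<circ> (inv \<phi> ^^ k)) = c \<circ> (inv \<phi> ^^ Suc k)" .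
  have "(inv_into characters (dual_map \<phi>) ^^ Suc k) c = inv_into characters (dual_map \<phi>) ((inv_into characters (dual_map \<phi>) ^^ k) c)"
    by (simp only: funpow.simps o_apply)
  also have "\<dots> = inv_into characters (dual_map \<phi>) (c \<circ> (inv \<phi> ^^ k))" by (simp only: Suc)
  also note *
  finally show ?case .
qed



lemma sumset_sub:
  assumes "is_subgroup P" "is_subgroup Q"
  shows "is_subgroup {a + b | a b. a \<in> P \<and> b \<in> Q}"
  unfolding is_subgroup_def
proof (intro conjI ballI)
  have "(0::'a) = 0 + 0" by simp
  then show "0 \<in> {a + b | a b. a \<in> P \<and> b \<in> Q}" using assms unfolding is_subgroup_def by blast
next
  fix x y assume "x \<in> {a + b | a b. a \<in> P \<and> b \<in> Q}" "y \<in> {a + b | a b. a \<in> P \<and> b \<in> Q}"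
  then obtain a b a' b' where h: "a \<in> P" "b \<in> Q" "a' \<in> P" "b' \<in> Q" "x = a + b" "y = a' + b'" by blast
  then have "x + y = (a + a') + (b + b')" by (simp add: algebra_simps)
  moreover have "a + a' \<in> P" "b + b' \<in> Q" using assms h unfolding is_subgroup_def by blast+
  ultimately show "x + y \<in> {a + b | a b. a \<in> P \<and> b \<in> Q}" by blast
next
  fix x assume "x \<in> {a + b | a b. a \<in> P \<and> b \<in> Q}"
  then obtain a b where h: "a \<in> P" "b \<in> Q" "x = a + b" by blast
  then have "- x = (- a) + (- b)" by (simp add: algebra_simps)
  moreover have "- a \<in> P" "- b \<in> Q" using assms h unfolding is_subgroup_def by blast+
  ultimately show "- x \<in> {a + b | a b. a \<in> P \<and> b \<in> Q}" by blast
qed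

lemma pos_zero: "is_endo \<phi> \<Longrightarrow> is_subgroup S \<Longrightarrow> 0 \<in> pos_trajectory \<phi> S n"
  using pos_sub unfolding is_subgroup_def by blast

theorem theorem5p1:
  fixes \<phi> :: "'a::ab_group_add \<Rightarrow> 'a"
  assumes "is_torsion_group TYPE('a)"
    and "is_endo \<phi>"
  shows "(alg_pos_expansive \<phi> \<longleftrightarrow>
            top_pos_expansive dual_top trivial_char (dual_map \<phi>))
       \<and> (bij \<phi> \<longrightarrow>
            (alg_expansive \<phi> \<longleftrightarrow> top_expansive dual_top trivial_char (dual_map \<phi>)))"
proof
  note tor = assms(1) and e = assms(2)
  have G1: "(\<exists>S. finite S \<and> is_subgroup S \<and> (\<forall>F. finite F \<and> is_subgroup F \<longrightarrow> (\<exists>n. F \<subseteq> pos_trajectory \<phi> S n))) \<longleftrightarrow>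
     (\<exists>U. U \<subseteq> characters \<and> (\<exists>V. openin dual_top V \<and> trivial_char \<in> V \<and> V \<subseteq> U) \<and>
        {x \<in> characters. \<forall>i. x \<circ> (\<phi> ^^ i) \<in> U} = {trivial_char})"
  proof (rule generic[OF tor])
    show "\<And>i. is_endo (\<phi> ^^ i)" using endo_pow[OF e] .
    show "\<And>S n. is_subgroup S \<Longrightarrow> is_subgroup (pos_trajectory \<phi> S n)" using pos_sub[OF e] .
    show "\<And>S m n. is_subgroup S \<Longrightarrow> m \<le> n \<Longrightarrow> pos_trajectory \<phi> S m \<subseteq> pos_trajectory \<phi> S n"
      using pos_mono[OF e] .
    show "\<And>S i. is_subgroup S \<Longrightarrow> \<exists>n. (\<phi> ^^ i) ` S \<subseteq> pos_trajectory \<phi> S n"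
      using pos_contains[OF e] by blast
    show "\<And>S n c. c \<in> characters \<Longrightarrow> (\<forall>i. \<forall>s\<in>S. c ((\<phi> ^^ i) s) = 1) \<Longrightarrow> \<forall>x\<in>pos_trajectory \<phi> S n. c x = 1"
      using pos_char by blast
  qed
  show "alg_pos_expansive \<phi> \<longleftrightarrow> top_pos_expansive dual_top trivial_char (dual_map \<phi>)"
    unfolding alg_pos_expansive_def top_pos_expansive_def topspace_dual dual_iter using G1 .
next
  note tor = assms(1) and e = assms(2)
  show "bij \<phi> \<longrightarrow> (alg_expansive \<phi> \<longleftrightarrow> top_expansive dual_top trivial_char (dual_map \<phi>))"
  proof
    assume b: "bij \<phi>"
    have ei: "is_endo (inv \<phi>)" using endo_inv[OF e b] .
    define f where "f = (\<lambda>(bb::bool, k::nat). if bb then \<phi> ^^ k else inv \<phi> ^^ k)"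
    have fe: "is_endo (f i)" for i unfolding f_def using endo_pow[OF e] endo_pow[OF ei] by (cases i) auto
    have G2: "(\<exists>S. finite S \<and> is_subgroup S \<and> (\<forall>F. finite F \<and> is_subgroup F \<longrightarrow> (\<exists>n. F \<subseteq> full_trajectory \<phi> S n))) \<longleftrightarrow>
     (\<exists>U. U \<subseteq> characters \<and> (\<exists>V. openin dual_top V \<and> trivial_char \<in> V \<and> V \<subseteq> U) \<and>
        {x \<in> characters. \<forall>i. x \<circ> f i \<in> U} = {trivial_char})"
    proof (rule generic[OF tor fe])
      show "\<And>S n. is_subgroup S \<Longrightarrow> is_subgroup (full_trajectory \<phi> S n)"
        unfolding full_eq by (rule sumset_sub[OF pos_sub[OF e] pos_sub[OF ei]])
      show "\<And>S m n. is_subgroup S \<Longrightarrow> m \<le> n \<Longrightarrow> full_trajectory \<phi> S m \<subseteq> full_trajectory \<phi> S n"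
      proof -
        fix S :: "'a set" and m n :: nat assume "is_subgroup S" "m \<le> n"
        then have "pos_trajectory \<phi> S m \<subseteq> pos_trajectory \<phi> S n"
          "pos_trajectory (inv \<phi>) S m \<subseteq> pos_trajectory (inv \<phi>) S n"
          using pos_mono[OF e] pos_mono[OF ei] by blast+
        then show "full_trajectory \<phi> S m \<subseteq> full_trajectory \<phi> S n" unfolding full_eq by blast
      qed
      show "\<And>S i. is_subgroup S \<Longrightarrow> \<exists>n. f i ` S \<subseteq> full_trajectory \<phi> S n"
      proof -
        fix S :: "'a set" and i :: "bool \<times> nat" assume S: "is_subgroup S"
        obtain bb k where i: "i = (bb, k)" by (cases i)
        have z1: "0 \<in> pos_trajectory \<phi> S k" and z2: "0 \<in> pos_trajectory (inv \<phi>) S k"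
          using pos_zero[OF e S] pos_zero[OF ei S] by blast+
        have "f i ` S \<subseteq> full_trajectory \<phi> S k"
        proof
          fix a assume a: "a \<in> f i ` S"
          show "a \<in> full_trajectory \<phi> S k"
          proof (cases bb)
            case True
            then have "a \<in> pos_trajectory \<phi> S k" using a pos_contains[OF e S] unfolding f_def i by auto
            moreover have "a = a + 0" by simp
            ultimately show ?thesis unfolding full_eq using z2 by blast
          next
            case False
            then have "a \<in> pos_trajectory (inv \<phi>) S k" using a pos_contains[OF ei S] unfolding f_def i by auto
            moreover have "a = 0 + a" by simp
            ultimately show ?thesis unfolding full_eq using z1 by blast
          qed
        qed
        then show "\<exists>n. f i ` S \<subseteq> full_trajectory \<phi> S n" by blast
      qed
      show "\<And>S n c. c \<in> characters \<Longrightarrow> (\<forall>i. \<forall>s\<in>S. c (f i s) = 1) \<Longrightarrow> \<forall>x\<in>full_trajectory \<phi> S n. c x = 1"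
      proof -
        fix S :: "'a set" and n c assume c: "c \<in> characters" and h: "\<forall>i. \<forall>s\<in>S. c (f i s) = 1"
        have h1: "\<forall>k. \<forall>s\<in>S. c ((\<phi> ^^ k) s) = 1"
        proof (intro allI)
          fix k show "\<forall>s\<in>S. c ((\<phi> ^^ k) s) = 1" using spec[OF h, of "(True, k)"] unfolding f_def by simp
        qed
        have h2: "\<forall>k. \<forall>s\<in>S. c ((inv \<phi> ^^ k) s) = 1"
        proof (intro allI)
          fix k show "\<forall>s\<in>S. c ((inv \<phi> ^^ k) s) = 1" using spec[OF h, of "(False, k)"] unfolding f_def by simp
        qed
        show "\<forall>x\<in>full_trajectory \<phi> S n. c x = 1"
        proof
          fix x assume "x \<in> full_trajectory \<phi> S n"
          then obtain a bb where "a \<in> pos_trajectory \<phi> S n" "bb \<in> pos_trajectory (inv \<phi>) S n" "x = a + bb"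
            unfolding full_eq by blast
          then show "c x = 1" using pos_char[OF c h1] pos_char[OF c h2] char_add[OF c] by simp
        qed
      qed
    qed
    have setEq: "{x \<in> characters. \<forall>k. (dual_map \<phi> ^^ k) x \<in> U \<and>
                     (inv_into characters (dual_map \<phi>) ^^ k) x \<in> U} =
                 {x \<in> characters. \<forall>i. x \<circ> f i \<in> U}" for U
    proof -
      have "(\<forall>k. (dual_map \<phi> ^^ k) x \<in> U \<and> (inv_into characters (dual_map \<phi>) ^^ k) x \<in> U) \<longleftrightarrow>
            (\<forall>i. x \<circ> f i \<in> U)" if x: "x \<in> characters" for x
      proof
        assume "\<forall>k. (dual_map \<phi> ^^ k) x \<in> U \<and> (inv_into characters (dual_map \<phi>) ^^ k) x \<in> U"
        then have "\<forall>k. x \<circ> (\<phi> ^^ k) \<in> U \<and> x \<circ> (inv \<phi> ^^ k) \<in> U"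
          unfolding dual_iter inv_dual_iter[OF e b x] .
        then show "\<forall>i. x \<circ> f i \<in> U" unfolding f_def by (simp split: prod.split)
      next
        assume h: "\<forall>i. x \<circ> f i \<in> U"
        have "\<forall>k. x \<circ> (\<phi> ^^ k) \<in> U \<and> x \<circ> (inv \<phi> ^^ k) \<in> U"
        proof
          fix k
          show "x \<circ> (\<phi> ^^ k) \<in> U \<and> x \<circ> (inv \<phi> ^^ k) \<in> U"
            using h[rule_format, of "(True, k)"] h[rule_format, of "(False, k)"] unfolding f_def by simp
        qed
        then show "\<forall>k. (dual_map \<phi> ^^ k) x \<in> U \<and> (inv_into characters (dual_map \<phi>) ^^ k) x \<in> U"
          unfolding dual_iter inv_dual_iter[OF e b x] .
      qed
      then show ?thesis by blast
    qed
    show "alg_expansive \<phi> \<longleftrightarrow> top_expansive dual_top trivial_char (dual_map \<phi>)"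
      unfolding alg_expansive_def top_expansive_def topspace_dual setEq using G2 .
  qed
qed

end
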